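(* Let $F,G$ be $C^2$ functions of one variable and let $X(r,s)=(x,y,z)$ be a graphical (regular) surface of the form $(\psi(y,z),y,z)$ given by the Barbishov-Chernikov representation $x=\int rF'(r)\,dr+\int sG'(s)\,ds$, $y-z=F(r)-\int s^2G'(s)\,ds$, $y+z=G(s)-\int r^2F'(r)\,dr$. Then $X(r,s)=\frac{\psi(r)+\phi(s)}{2}$, where $$\psi(r)=\Big(2\int rF'(r)\,dr,\ F(r)-\int r^2F'(r)\,dr,\ -F(r)-\int r^2F'(r)\,dr\Big),$$ $$\phi(s)=\Big(2\int sG'(s)\,ds,\ G(s)-\int s^2G'(s)\,ds,\ G(s)+\int s^2G'(s)\,ds\Big),$$ $\psi$ and $\phi$ are lightlike curves in $\mathbb{L}^3$, and $\psi'(r)$, $\phi'(s)$ are linearly independent for all values of $r$ and $s$. Consequently these surfaces are timelike minimal.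
   Context: $\mathbb{L}^3$ denotes $\mathbb{R}^3$ with the metric $ds^2=dx^2+dy^2-dz^2$. A curve is lightlike if its velocity $v$ satisfies $\langle v,v\rangle=0$. A surface is timelike if its induced metric is Lorentzian, and minimal if its mean curvature vanishes. Integrals denote fixed antiderivatives (the same ones in the representation of $X$ and in $\psi,\phi$). *)

theory Defs
  imports "HOL-Analysis.Analysis"
begin

text \<open>Lorentz-Minkowski space L^3: metric dx^2 + dy^2 - dz^2 on real^3.\<close>
definition lip :: "real^3 \<Rightarrow> real^3 \<Rightarrow> real" where
  "lip u v = u$1 * v$1 + u$2 * v$2 - u$3 * v$3"

definition lightlike :: "real^3 \<Rightarrow> bool" where
  "lightlike v \<longleftrightarrow> lip v v = 0"

text \<open>Lorentzian cross product (orthogonal w.r.t. lip to both arguments).\<close>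
definition lcross :: "real^3 \<Rightarrow> real^3 \<Rightarrow> real^3" where
  "lcross u v = vector [u$2* v$3 - u$3* v$2, u$3* v$1 - u$1* v$3, -(u$1* v$2 - u$2* v$1)]"

definition lin_indep2 :: "real^3 \<Rightarrow> real^3 \<Rightarrow> bool" where
  "lin_indep2 u v \<longleftrightarrow> (\<forall>a b. a *\<^sub>R u + b *\<^sub>R v = 0 \<longrightarrow> a = 0 \<and> b = 0)"

definition Xr :: "(real \<Rightarrow> real \<Rightarrow> real^3) \<Rightarrow> real \<Rightarrow> real \<Rightarrow> real^3" where
  "Xr X r s = vector_derivative (\<lambda>t. X t s) (at r)"
definition Xs :: "(real \<Rightarrow> real \<Rightarrow> real^3) \<Rightarrow> real \<Rightarrow> real \<Rightarrow> real^3" where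
  "Xs X r s = vector_derivative (\<lambda>t. X r t) (at s)"
definition Xrr :: "(real \<Rightarrow> real \<Rightarrow> real^3) \<Rightarrow> real \<Rightarrow> real \<Rightarrow> real^3" where
  "Xrr X r s = vector_derivative (\<lambda>t. Xr X t s) (at r)"
definition Xrs :: "(real \<Rightarrow> real \<Rightarrow> real^3) \<Rightarrow> real \<Rightarrow> real \<Rightarrow> real^3" where
  "Xrs X r s = vector_derivative (\<lambda>t. Xr X r t) (at s)"
definition Xss :: "(real \<Rightarrow> real \<Rightarrow> real^3) \<Rightarrow> real \<Rightarrow> real \<Rightarrow> real^3" where
  "Xss X r s = vector_derivative (\<lambda>t. Xs X r t) (at s)"

definition fE where "fE X r s = lip (Xr X r s) (Xr X r s)"
definition fF where "fF X r s = lip (Xr X r s) (Xs X r s)"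
definition fG where "fG X r s = lip (Xs X r s) (Xs X r s)"

definition timelike_at where
  "timelike_at X r s \<longleftrightarrow> fE X r s * fG X r s - (fF X r s)^2 < 0"

definition unormal where
  "unormal X r s = (let N = lcross (Xr X r s) (Xs X r s) in (1 / sqrt \<bar>lip N N\<bar>) *\<^sub>R N)"
definition sL where "sL X r s = lip (Xrr X r s) (unormal X r s)"
definition sM where "sM X r s = lip (Xrs X r s) (unormal X r s)"
definition sN where "sN X r s = lip (Xss X r s) (unormal X r s)"

definition mean_curv where
  "mean_curv X r s = lip (unormal X r s) (unormal X r s) *
     (fE X r s * sN X r s - 2 * fF X r s * sM X r s + fG X r s * sL X r s)
     / (2 * (fE X r s * fG X r s - (fF X r s)^2))"

definition timelike_minimal_on where
  "timelike_minimal_on X U \<longleftrightarrow> (\<forall>(r,s)\<in>U. timelike_at X r s \<and> mean_curv X r s = 0)"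

end

theory Submission
  imports Defs
begin

lemma vec3_axis: "(vector [a,b,c] :: real^3) = a *\<^sub>R axis 1 1 + b *\<^sub>R axis 2 1 + c *\<^sub>R axis 3 1"
  by (simp add: vec_eq_iff forall_3 axis_def)

lemma vec3_deriv:
  assumes "(f has_real_derivative f') (at x)" "(g has_real_derivative g') (at x)" "(h has_real_derivative h') (at x)"
  shows "((\<lambda>t. vector [f t, g t, h t] :: real^3) has_vector_derivative vector [f', g', h']) (at x)"
proof -
  have "((\<lambda>t. f t *\<^sub>R axis 1 1 + g t *\<^sub>R axis 2 1 + h t *\<^sub>R axis 3 1 :: real^3) has_vector_derivative
     f' *\<^sub>R axis 1 1 + g' *\<^sub>R axis 2 1 + h' *\<^sub>R axis 3 1) (at x)"
    using assms by (intro derivative_eq_intros) (auto simp: has_real_derivative_iff_has_vector_derivative)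
  then show ?thesis by (simp add: vec3_axis)
qed

lemma lip_scale: "lip (a *\<^sub>R u) (b *\<^sub>R v) = a * b * lip u v"
  by (simp add: lip_def algebra_simps)

lemma lin_indep2_half: "lin_indep2 ((1/2) *\<^sub>R u) ((1/2) *\<^sub>R v) \<Longrightarrow> lin_indep2 u v"
  unfolding lin_indep2_def
proof (intro allI impI)
  fix a b :: real
  assume h: "\<forall>a b. a *\<^sub>R (1 / 2) *\<^sub>R u + b *\<^sub>R (1 / 2) *\<^sub>R v = 0 \<longrightarrow> a = 0 \<and> b = 0"
    and e: "a *\<^sub>R u + b *\<^sub>R v = 0"
  have "(2*a) *\<^sub>R (1 / 2) *\<^sub>R u + (2*b) *\<^sub>R (1 / 2) *\<^sub>R v = 0" using e by simp
  then show "a = 0 \<and> b = 0" using h by fastforce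
qed

theorem theorem5p3:
  fixes F F1 F2 G G1 G2 A1 A2 B1 B2 :: "real \<Rightarrow> real"
    and I J :: "real set"
    and X :: "real \<Rightarrow> real \<Rightarrow> real^3"
    and \<psi> \<phi> :: "real \<Rightarrow> real^3"
  assumes I: "open I" and J: "open J"
    and F1: "\<And>r. r \<in> I \<Longrightarrow> (F has_real_derivative F1 r) (at r)"
    and F2: "\<And>r. r \<in> I \<Longrightarrow> (F1 has_real_derivative F2 r) (at r)"
    and F2c: "continuous_on I F2"
    and G1: "\<And>s. s \<in> J \<Longrightarrow> (G has_real_derivative G1 s) (at s)"
    and G2: "\<And>s. s \<in> J \<Longrightarrow> (G1 has_real_derivative G2 s) (at s)"
    and G2c: "continuous_on J G2"
    and A1: "\<And>r. r \<in> I \<Longrightarrow> (A1 has_real_derivative r * F1 r) (at r)"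
    and A2: "\<And>r. r \<in> I \<Longrightarrow> (A2 has_real_derivative r^2 * F1 r) (at r)"
    and B1: "\<And>s. s \<in> J \<Longrightarrow> (B1 has_real_derivative s * G1 s) (at s)"
    and B2: "\<And>s. s \<in> J \<Longrightarrow> (B2 has_real_derivative s^2 * G1 s) (at s)"
    and X: "\<And>r s. r \<in> I \<Longrightarrow> s \<in> J \<Longrightarrow>
              X r s $ 1 = A1 r + B1 s \<and>
              X r s $ 2 - X r s $ 3 = F r - B2 s \<and>
              X r s $ 2 + X r s $ 3 = G s - A2 r"
    and graphical: "inj_on (\<lambda>(r,s). (X r s $ 2, X r s $ 3)) (I \<times> J)"
    and regular: "\<And>r s. r \<in> I \<Longrightarrow> s \<in> J \<Longrightarrow> lin_indep2 (Xr X r s) (Xs X r s)"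
    and \<psi>: "\<psi> = (\<lambda>r. vector [2 * A1 r, F r - A2 r, - F r - A2 r])"
    and \<phi>: "\<phi> = (\<lambda>s. vector [2 * B1 s, G s - B2 s, G s + B2 s])"
  shows "(\<forall>r\<in>I. \<forall>s\<in>J. X r s = (1/2) *\<^sub>R (\<psi> r + \<phi> s))
    \<and> (\<forall>r\<in>I. \<psi> differentiable (at r) \<and> lightlike (vector_derivative \<psi> (at r)))
    \<and> (\<forall>s\<in>J. \<phi> differentiable (at s) \<and> lightlike (vector_derivative \<phi> (at s)))
    \<and> (\<forall>r\<in>I. \<forall>s\<in>J. lin_indep2 (vector_derivative \<psi> (at r)) (vector_derivative \<phi> (at s)))
    \<and> timelike_minimal_on X (I \<times> J)"
proof -
  define pd where "pd r = (vector [2*(r*F1 r), F1 r - r^2*F1 r, -F1 r - r^2*F1 r] :: real^3)" for r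
  define qd where "qd s = (vector [2*(s*G1 s), G1 s - s^2*G1 s, G1 s + s^2*G1 s] :: real^3)" for s
  have eqX: "X r s = (1/2) *\<^sub>R (\<psi> r + \<phi> s)" if "r \<in> I" "s \<in> J" for r s
    using X[OF that] unfolding \<psi> \<phi> by (simp add: vec_eq_iff forall_3)
  have dpsi: "(\<psi> has_vector_derivative pd r) (at r)" if "r \<in> I" for r
    unfolding \<psi> pd_def
    by (rule vec3_deriv) (auto intro!: derivative_eq_intros A1 A2 F1 that)
  have dphi: "(\<phi> has_vector_derivative qd s) (at s)" if "s \<in> J" for s
    unfolding \<phi> qd_def
    by (rule vec3_deriv) (auto intro!: derivative_eq_intros B1 B2 G1 that)
  have vpsi: "vector_derivative \<psi> (at r) = pd r" if "r \<in> I" for r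
    using dpsi[OF that] by (rule vector_derivative_at)
  have vphi: "vector_derivative \<phi> (at s) = qd s" if "s \<in> J" for s
    using dphi[OF that] by (rule vector_derivative_at)
  have XrE: "Xr X r s = (1/2) *\<^sub>R pd r" if "r \<in> I" "s \<in> J" for r s
  proof -
    have "((\<lambda>t. (1/2) *\<^sub>R (\<psi> t + \<phi> s)) has_vector_derivative (1/2) *\<^sub>R (pd r + 0)) (at r)"
      by (intro bounded_linear.has_vector_derivative[OF bounded_linear_scaleR_right] has_vector_derivative_add dpsi that has_vector_derivative_const)
    then have "((\<lambda>t. (1/2) *\<^sub>R (\<psi> t + \<phi> s)) has_vector_derivative (1/2) *\<^sub>R pd r) (at r)" by simp
    then have "((\<lambda>t. X t s) has_vector_derivative (1/2) *\<^sub>R pd r) (at r)"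
      by (rule has_vector_derivative_transform_within_open[OF _ I \<open>r \<in> I\<close>]) (simp_all add: eqX that)
    then show ?thesis unfolding Xr_def by (rule vector_derivative_at)
  qed
  have XsE: "Xs X r s = (1/2) *\<^sub>R qd s" if "r \<in> I" "s \<in> J" for r s
  proof -
    have "((\<lambda>t. (1/2) *\<^sub>R (\<psi> r + \<phi> t)) has_vector_derivative (1/2) *\<^sub>R (0 + qd s)) (at s)"
      by (intro bounded_linear.has_vector_derivative[OF bounded_linear_scaleR_right] has_vector_derivative_add dphi that has_vector_derivative_const)
    then have "((\<lambda>t. (1/2) *\<^sub>R (\<psi> r + \<phi> t)) has_vector_derivative (1/2) *\<^sub>R qd s) (at s)" by simp
    then have "((\<lambda>t. X r t) has_vector_derivative (1/2) *\<^sub>R qd s) (at s)"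
      by (rule has_vector_derivative_transform_within_open[OF _ J \<open>s \<in> J\<close>]) (simp_all add: eqX that)
    then show ?thesis unfolding Xs_def by (rule vector_derivative_at)
  qed
  have XrsE: "Xrs X r s = 0" if "r \<in> I" "s \<in> J" for r s
  proof -
    have "((\<lambda>t. (1/2) *\<^sub>R pd r) has_vector_derivative 0) (at s)"
      by (rule has_vector_derivative_const)
    then have "((\<lambda>t. Xr X r t) has_vector_derivative 0) (at s)"
      by (rule has_vector_derivative_transform_within_open[OF _ J \<open>s \<in> J\<close>]) (simp_all add: XrE that)
    then show ?thesis unfolding Xrs_def by (rule vector_derivative_at)
  qed
  have lpd: "lip (pd r) (pd r) = 0" for r
    by (simp add: pd_def lip_def algebra_simps power2_eq_square)
  have lqd: "lip (qd s) (qd s) = 0" for s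
    by (simp add: qd_def lip_def algebra_simps power2_eq_square)
  have indep: "lin_indep2 (pd r) (qd s)" if "r \<in> I" "s \<in> J" for r s
    using regular[OF that] XrE[OF that] XsE[OF that] lin_indep2_half by simp
  have lpq: "lip (pd r) (qd s) = 2 * F1 r * G1 s * ((1 + r * s)^2)" for r s
    by (simp add: pd_def qd_def lip_def algebra_simps power2_eq_square)
  have lpq0: "lip (pd r) (qd s) \<noteq> 0" if "r \<in> I" "s \<in> J" for r s
  proof
    assume h: "lip (pd r) (qd s) = 0"
    have li: "\<And>a b. a *\<^sub>R pd r + b *\<^sub>R qd s = 0 \<Longrightarrow> a = 0 \<and> b = 0"
      using indep[OF that] unfolding lin_indep2_def by blast
    have "F1 r = 0 \<or> G1 s = 0 \<or> 1 + r * s = 0" using h lpq by simp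
    moreover have "F1 r \<noteq> 0"
    proof
      assume "F1 r = 0"
      then have "1 *\<^sub>R pd r + 0 *\<^sub>R qd s = 0" by (simp add: pd_def vec_eq_iff forall_3)
      then show False using li by fastforce
    qed
    moreover have "G1 s \<noteq> 0"
    proof
      assume "G1 s = 0"
      then have "0 *\<^sub>R pd r + 1 *\<^sub>R qd s = 0" by (simp add: qd_def vec_eq_iff forall_3)
      then show False using li by fastforce
    qed
    moreover have "1 + r * s \<noteq> 0"
    proof
      assume rs: "1 + r * s = 0"
      have "G1 s *\<^sub>R pd r + (F1 r * r^2) *\<^sub>R qd s = 0"
      proof -
        show ?thesis using rs unfolding pd_def qd_def vec_eq_iff forall_3
          by (simp add: power2_eq_square) algebra
      qed
      then show False using li \<open>G1 s \<noteq> 0\<close> by fastforce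
    qed
    ultimately show False by blast
  qed
  have tm: "timelike_minimal_on X (I \<times> J)"
    unfolding timelike_minimal_on_def
  proof (clarify)
    fix r s assume rs: "r \<in> I" "s \<in> J"
    have E: "fE X r s = 0" and G: "fG X r s = 0"
      unfolding fE_def fG_def using XrE[OF rs] XsE[OF rs] lpd lqd by (simp_all add: lip_scale)
    have Fv: "fF X r s = (1/4) * lip (pd r) (qd s)"
      unfolding fF_def using XrE[OF rs] XsE[OF rs] by (simp add: lip_scale)
    have M: "sM X r s = 0" unfolding sM_def using XrsE[OF rs] by (simp add: lip_def)
    show "timelike_at X r s \<and> mean_curv X r s = 0"
      unfolding timelike_at_def mean_curv_def using E G Fv M lpq0[OF rs] by simp
  qed
  show ?thesis
    using eqX dpsi dphi vpsi vphi lpd lqd indep tm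
    by (auto simp: lightlike_def intro: differentiableI_vector[OF dpsi] differentiableI_vector[OF dphi])
qed

end
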